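(* For any real numbers $0\le q_1,q_2\le 1$ there exist a non-principal ultrafilter $\mathcal U$ on $\mathbb N$ and coprime natural numbers $2\le a_i<b_i$ ($i\in\mathbb N$) such that the ultraproduct $S=\prod_{\mathcal U}S_i$ of the semigroups $S_i=\{xa_i+yb_i:x,y\in\mathbb N\}$ is a (nontrivial) limit 2-semigroup with generators $a=[(a_i)]_{\mathcal U}$, $b=[(b_i)]_{\mathcal U}$ satisfying $r(b-\alpha(b),a)=q_1$ and $r(\beta_1,ab)=q_2$.
   Context: Each $S_i$ is an ordered monoid in the language $\{+,<,0\}$; a limit 2-semigroup is an ultraproduct $\prod_{\mathcal U}S_i$ over a non-principal ultrafilter $\mathcal U$ that is not isomorphic to a standard numerical semigroup, and its generators are $a=[(a_i)]_{\mathcal U}$, $b=[(b_i)]_{\mathcal U}$. In a standard 2-semigroup with generators $a<b$: $\alpha(b)$ is the largest multiple of $a$ that is $\le b$ (namely $\lfloor b/a\rfloor a$); $\beta_1$ is the least multiple of $b$ that is $\equiv1\pmod a$, i.e. $\beta_1=kb$ with $0\le k<a$, $kb\equiv 1 \pmod a$; $ab$ is the product. These are first-order definable uniformly, so they have interpretations in $S$ (coordinatewise). For elements $x\ge x'$ and $y>y'$ of $S$, the ratio is $r(x-x',y-y')=\sup\{p/q : p,q\in\mathbb Z_{\ge0},\ q\ne0,\ S\models p\,y+q\,x'\le q\,x+p\,y'\}$, where $p\,y$ denotes $y$ added to itself $p$ times; $r(x_0,y-y')$ abbreviates the case $x'=0$, $x=x_0$ (and similarly for $y$). Thus $r(b-\alpha(b),a)=\sup\{p/q: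 S\models p a+q\alpha(b)\le qb\}$ and $r(\beta_1,ab)=\sup\{p/q: S\models p\,ab\le q\beta_1\}$. *)

theory Defs
  imports Complex_Main
begin

definition ultrafilter_on_nat :: "nat set set \<Rightarrow> bool" where
  "ultrafilter_on_nat U \<longleftrightarrow>
     UNIV \<in> U \<and> {} \<notin> U \<and>
     (\<forall>A B. A \<in> U \<and> B \<in> U \<longrightarrow> A \<inter> B \<in> U) \<and>
     (\<forall>A B. A \<in> U \<and> A \<subseteq> B \<longrightarrow> B \<in> U) \<and>
     (\<forall>A. A \<in> U \<or> - A \<in> U)"

definition nonprincipal :: "nat set set \<Rightarrow> bool" where
  "nonprincipal U \<longleftrightarrow> (\<forall>n. {n} \<notin> U)"

definition U_ae :: "nat set set \<Rightarrow> (nat \<Rightarrow> bool) \<Rightarrow> bool" where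
  "U_ae U P \<longleftrightarrow> {i. P i} \<in> U"

definition sgp2 :: "nat \<Rightarrow> nat \<Rightarrow> nat set" where
  "sgp2 a b = {x * a + y * b | x y. True}"

definition alpha_fn :: "nat \<Rightarrow> nat \<Rightarrow> nat" where
  "alpha_fn a b = (b div a) * a"

definition beta1_fn :: "nat \<Rightarrow> nat \<Rightarrow> nat" where
  "beta1_fn a b = (LEAST k. k < a \<and> (k * b) mod a = 1 mod a) * b"

(* Elements of the ultraproduct are represented by sequences f with f i \<in> S_i;
   two represent the same element iff they agree U-almost everywhere; + and 0 are
   coordinatewise and x \<le> y holds in S iff it holds U-almost everywhere. *)
definition ultra_carrier :: "(nat \<Rightarrow> nat set) \<Rightarrow> (nat \<Rightarrow> nat) set" where
  "ultra_carrier S = {f. \<forall>i. f i \<in> S i}"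

(* ratio r(x - x', y - y') computed in the ultraproduct, via representatives *)
definition ultra_ratio :: "nat set set \<Rightarrow> (nat \<Rightarrow> nat) \<Rightarrow> (nat \<Rightarrow> nat) \<Rightarrow>
                           (nat \<Rightarrow> nat) \<Rightarrow> (nat \<Rightarrow> nat) \<Rightarrow> real" where
  "ultra_ratio U x x' y y' =
     Sup {real p / real q | p q. q \<noteq> 0 \<and>
            U_ae U (\<lambda>i. p * y i + q * x' i \<le> q * x i + p * y' i)}"

definition numerical_semigroup :: "nat set \<Rightarrow> bool" where
  "numerical_semigroup T \<longleftrightarrow> 0 \<in> T \<and> (\<forall>x\<in>T. \<forall>y\<in>T. x + y \<in> T) \<and> finite (- T)"

definition ultra_iso_to :: "nat set set \<Rightarrow> (nat \<Rightarrow> nat set) \<Rightarrow> nat set \<Rightarrow> bool" where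
  "ultra_iso_to U S T \<longleftrightarrow> (\<exists>\<phi> :: (nat \<Rightarrow> nat) \<Rightarrow> nat.
     \<phi> ` ultra_carrier S = T \<and>
     (\<forall>f\<in>ultra_carrier S. \<forall>g\<in>ultra_carrier S. \<phi> f = \<phi> g \<longleftrightarrow> U_ae U (\<lambda>i. f i = g i)) \<and>
     (\<forall>f\<in>ultra_carrier S. \<forall>g\<in>ultra_carrier S. \<phi> (\<lambda>i. f i + g i) = \<phi> f + \<phi> g) \<and>
     \<phi> (\<lambda>i. 0) = 0 \<and>
     (\<forall>f\<in>ultra_carrier S. \<forall>g\<in>ultra_carrier S. \<phi> f < \<phi> g \<longleftrightarrow> U_ae U (\<lambda>i. f i < g i)))"

definition limit_2_semigroup :: "nat set set \<Rightarrow> (nat \<Rightarrow> nat) \<Rightarrow> (nat \<Rightarrow> nat) \<Rightarrow> bool" where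
  "limit_2_semigroup U a b \<longleftrightarrow>
     \<not> (\<exists>T. numerical_semigroup T \<and> ultra_iso_to U (\<lambda>i. sgp2 (a i) (b i)) T)"

end

theory Submission imports Defs begin


lemma core_int:
  fixes N k m :: int
  assumes N: "N \<ge> 2" and k: "0 \<le> k" "k \<le> N - 1" and m: "0 \<le> m" "m \<le> N - 1"
  shows "\<exists>a u v. N \<le> a \<and> 0 < u \<and> u < a \<and> 0 < v \<and> v < a \<and> (u * v) mod a = 1 \<and>
           u * N^2 = (k*N+1)*a - N^2 \<and> v * N^2 = (N^2 - m*N - 1)*a - N^2"
proof -
  define P where "P = k*N+1"
  define s where "s = k*(N-k)+1"
  define C where "C = N^2"
  define d where "d = N^2 - k*N + 1"
  define e where "e = N^2"
  define f where "f = m*N+1"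
  define g where "g = m*N - 1"
  define h where "h = m^2"
  define a where "a = C*(e+g)+d*e"
  define u where "u = P*(e+g)+s*e"
  define M12 where "M12 = P*(f+h)+s*f"
  define M22 where "M22 = C*(f+h)+d*f"
  define v where "v = a - M22"
  have id1: "u*v = 1 + a*(u-M12)"
    unfolding v_def u_def a_def M12_def M22_def P_def s_def C_def d_def e_def f_def g_def h_def
    by (simp add: algebra_simps power2_eq_square)
  have id2: "u * N^2 = (k*N+1)*a - N^2"
    unfolding u_def a_def P_def s_def C_def d_def e_def f_def g_def
    by (simp add: algebra_simps power2_eq_square)
  have id3: "v * N^2 = (N^2 - m*N - 1)*a - N^2"
    unfolding v_def a_def M22_def P_def s_def C_def d_def e_def f_def g_def h_def
    by (simp add: algebra_simps power2_eq_square)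
  have ida: "a = N^3 * (2*N + m - k)"
    unfolding a_def C_def d_def e_def g_def
    by (simp add: algebra_simps power2_eq_square power3_eq_cube)
  have N2: "N^2 \<ge> 2 * N" using N by (simp add: power2_eq_square)
  have "2*N + m - k \<ge> N + 1" using k m by simp
  moreover have "N^3 \<ge> N^2" using N by (simp add: power_increasing)
  ultimately have "a \<ge> N^2 * (N+1)" unfolding ida
    using N by (intro mult_mono) auto
  hence aN: "a \<ge> N^2 * (N+1)" .
  have N2p: "N^2 > 0" using N by simp
  have "N^2 * 1 < N^2 * (N+1)" using N2p N by (intro mult_strict_left_mono) auto
  hence aN2: "a > N^2" using aN by simp
  have apos: "a > 0" using aN2 N2p by linarith
  have Na: "N \<le> a" using aN2 N2 N by linarith
  have kN: "k*N \<le> (N-1)*N" using k N by (intro mult_right_mono) auto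
  have mN: "m*N \<le> (N-1)*N" using m N by (intro mult_right_mono) auto
  have "k*N \<ge> 0" using k N by simp
  hence "1 * a \<le> (k*N+1)*a" using apos by (intro mult_right_mono) auto
  hence "(k*N+1)*a \<ge> a" by simp
  hence "u * N^2 > 0" using id2 aN2 by linarith
  hence u0: "u > 0" using N2p by (simp add: zero_less_mult_iff)
  have "(k*N+1)*a \<le> (N^2 - N + 1)*a" using kN aN2 N2p
    by (intro mult_right_mono) (auto simp: power2_eq_square algebra_simps)
  moreover have "(N^2 - N + 1)*a = N^2*a - (N-1)*a" by (simp add: algebra_simps)
  moreover have "(N-1)*a \<ge> 0" using N apos by simp
  ultimately have "u * N^2 < N^2 * a" using id2 N2p by linarith
  hence "u * N^2 < a * N^2" by (simp add: mult.commute)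
  hence ua: "u < a" using N2p by simp
  have "(N^2 - m*N - 1) \<ge> 1" using mN N by (simp add: power2_eq_square algebra_simps)
  hence "1 * a \<le> (N^2 - m*N - 1)*a" using apos by (intro mult_right_mono) auto
  hence "(N^2 - m*N - 1)*a \<ge> a" by simp
  hence "v * N^2 > 0" using id3 aN2 by linarith
  hence v0: "v > 0" using N2p by (simp add: zero_less_mult_iff)
  have "m*N \<ge> 0" using m N by simp
  hence "(N^2 - m*N - 1)*a \<le> N^2*a" using apos
    by (intro mult_right_mono) auto
  hence "v * N^2 < N^2 * a" using id3 N2p by linarith
  hence "v * N^2 < a * N^2" by (simp add: mult.commute)
  hence va: "v < a" using N2p by simp
  have "(u*v) mod a = 1" unfolding id1 using aN2 N2 N by simp
  thus ?thesis using Na u0 ua v0 va id2 id3 by blast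
qed


definition isF :: "nat set set \<Rightarrow> bool" where
  "isF F \<longleftrightarrow> {A. finite (-A)} \<subseteq> F \<and> {} \<notin> F \<and> (\<forall>A B. A\<in>F \<and> B\<in>F \<longrightarrow> A\<inter>B\<in>F)
     \<and> (\<forall>A B. A\<in>F \<and> A\<subseteq>B \<longrightarrow> B\<in>F)"

lemma isF_Fr: "isF {A. finite (-A)}"
  unfolding isF_def by (auto intro: finite_subset)

lemma exists_ultra: "\<exists>U. ultrafilter_on_nat U \<and> {A. finite (-A)} \<subseteq> U"
proof -
  have "\<forall>C\<in>chains (Collect isF). \<exists>U\<in>Collect isF. \<forall>X\<in>C. X \<subseteq> U"
  proof
    fix C assume C: "C \<in> chains (Collect isF)"
    show "\<exists>U\<in>Collect isF. \<forall>X\<in>C. X \<subseteq> U"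
    proof (cases "C = {}")
      case True thus ?thesis using isF_Fr by auto
    next
      case False
      then obtain F0 where F0: "F0 \<in> C" by auto
      have CF: "\<And>F. F \<in> C \<Longrightarrow> isF F" using C unfolding chains_def by auto
      have ch: "\<And>F G. F \<in> C \<Longrightarrow> G \<in> C \<Longrightarrow> F \<subseteq> G \<or> G \<subseteq> F"
        using C unfolding chains_def chain_subset_def by auto
      have "isF (\<Union>C)"
        unfolding isF_def
      proof (intro conjI allI impI)
        show "{A. finite (- A)} \<subseteq> \<Union> C" using CF[OF F0] F0 unfolding isF_def by auto
        show "{} \<notin> \<Union> C" using CF unfolding isF_def by auto
      next
        fix A B assume "A \<in> \<Union> C \<and> B \<in> \<Union> C"
        then obtain F G where FG: "F \<in> C" "G \<in> C" "A \<in> F" "B \<in> G" by auto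
        show "A \<inter> B \<in> \<Union> C"
        proof (cases "F \<subseteq> G")
          case True thus ?thesis using FG CF[OF FG(2)] unfolding isF_def by blast
        next
          case False
          hence "G \<subseteq> F" using ch FG by blast
          thus ?thesis using FG CF[OF FG(1)] unfolding isF_def by blast
        qed
      next
        fix A B assume "A \<in> \<Union> C \<and> A \<subseteq> B"
        thus "B \<in> \<Union> C" using CF unfolding isF_def by blast
      qed
      thus ?thesis by auto
    qed
  qed
  from Zorn_Lemma2[OF this] obtain M where M: "isF M"
    and max: "\<And>X. isF X \<Longrightarrow> M \<subseteq> X \<Longrightarrow> X = M" by auto
  have "ultrafilter_on_nat M"
    unfolding ultrafilter_on_nat_def
  proof (intro conjI allI impI)
    show "UNIV \<in> M" using M unfolding isF_def by auto
    show "{} \<notin> M" using M unfolding isF_def by auto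
  next
    fix A B assume "A \<in> M \<and> B \<in> M" thus "A \<inter> B \<in> M" using M unfolding isF_def by auto
  next
    fix A B assume "A \<in> M \<and> A \<subseteq> B" thus "B \<in> M" using M unfolding isF_def by auto
  next
    fix A
    show "A \<in> M \<or> - A \<in> M"
    proof (rule ccontr)
      assume nA: "\<not> (A \<in> M \<or> - A \<in> M)"
      define M' where "M' = {X. \<exists>Y\<in>M. A \<inter> Y \<subseteq> X}"
      have "isF M'"
        unfolding isF_def
      proof (intro conjI allI impI)
        show "{A. finite (- A)} \<subseteq> M'" using M unfolding isF_def M'_def by auto
        show "{} \<notin> M'"
        proof
          assume "{} \<in> M'"
          then obtain Y where "Y \<in> M" "A \<inter> Y \<subseteq> {}" unfolding M'_def by auto
          hence "Y \<subseteq> -A" by auto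
          hence "-A \<in> M" using M \<open>Y \<in> M\<close> unfolding isF_def by metis
          thus False using nA by auto
        qed
      next
        fix X1 X2 assume "X1 \<in> M' \<and> X2 \<in> M'"
        then obtain Y1 Y2 where "Y1 \<in> M" "Y2 \<in> M" "A \<inter> Y1 \<subseteq> X1" "A \<inter> Y2 \<subseteq> X2"
          unfolding M'_def by auto
        moreover hence "Y1 \<inter> Y2 \<in> M" using M unfolding isF_def by auto
        ultimately have "A \<inter> (Y1 \<inter> Y2) \<subseteq> X1 \<inter> X2" "Y1 \<inter> Y2 \<in> M" by auto
        thus "X1 \<inter> X2 \<in> M'" unfolding M'_def by blast
      next
        fix X1 X2 assume "X1 \<in> M' \<and> X1 \<subseteq> X2"
        thus "X2 \<in> M'" unfolding M'_def by blast
      qed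
      moreover have "M \<subseteq> M'" unfolding M'_def by blast
      ultimately have MM: "M' = M" using max by blast
      have "UNIV \<in> M" using M unfolding isF_def by auto
      hence "A \<in> M'" unfolding M'_def by auto
      thus False using nA MM by simp
    qed
  qed
  moreover have "{A. finite (-A)} \<subseteq> M" using M unfolding isF_def by blast
  ultimately show ?thesis by blast
qed



lemma ev_in_U:
  assumes cof: "{A. finite (-A)} \<subseteq> U" and ev: "eventually P sequentially"
  shows "{i. P i} \<in> U"
proof -
  obtain N where N: "\<And>n. n \<ge> N \<Longrightarrow> P n" using ev unfolding eventually_sequentially by auto
  have "- {i. P i} \<subseteq> {..<N}" using N by (auto simp: not_less[symmetric])
  hence "finite (- {i. P i})" by (rule finite_subset) simp
  thus ?thesis using cof by auto
qed

lemma sup_ratio: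
  fixes U and A R :: "nat \<Rightarrow> nat" and P :: "nat \<Rightarrow> nat \<Rightarrow> nat \<Rightarrow> bool" and L :: real
  assumes uf: "ultrafilter_on_nat U" and cof: "{A. finite (-A)} \<subseteq> U"
    and Apos: "\<And>i. A i > 0"
    and P: "\<And>p q i. P p q i \<longleftrightarrow> p * A i \<le> q * R i"
    and lim: "(\<lambda>i. real (R i) / real (A i)) \<longlonglongrightarrow> L" and L0: "0 \<le> L"
  shows "Sup {real p / real q | p q. q \<noteq> 0 \<and> U_ae U (\<lambda>i. P p q i)} = L"
proof (rule cSup_eq_non_empty)
  have U1: "UNIV \<in> U" and U2: "{} \<notin> U" and U3: "\<And>X Y. X \<in> U \<Longrightarrow> Y \<in> U \<Longrightarrow> X \<inter> Y \<in> U"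
    and U4: "\<And>X Y. X \<in> U \<Longrightarrow> X \<subseteq> Y \<Longrightarrow> Y \<in> U"
    using uf unfolding ultrafilter_on_nat_def by blast+
  have S0: "real 0 / real 1 \<in> {real p / real q | p q. q \<noteq> 0 \<and> U_ae U (\<lambda>i. P p q i)}"
  proof -
    have "{i. P 0 1 i} = UNIV" using P by auto
    hence "U_ae U (\<lambda>i. P 0 1 i)" using U1 unfolding U_ae_def by simp
    thus ?thesis by blast
  qed
  thus "{real p / real q | p q. q \<noteq> 0 \<and> U_ae U (\<lambda>i. P p q i)} \<noteq> {}" by blast
  {
    fix x assume "x \<in> {real p / real q | p q. q \<noteq> 0 \<and> U_ae U (\<lambda>i. P p q i)}"
    then obtain p q where x: "x = real p / real q" "q \<noteq> 0" "{i. P p q i} \<in> U"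
      unfolding U_ae_def by auto
    show "x \<le> L"
    proof (rule ccontr)
      assume "\<not> x \<le> L"
      hence "eventually (\<lambda>i. real (R i) / real (A i) < x) sequentially"
        using lim by (intro order_tendstoD(2)) auto
      hence "{i. real (R i) / real (A i) < x} \<in> U" by (rule ev_in_U[OF cof])
      hence "{i. P p q i} \<inter> {i. real (R i) / real (A i) < x} \<in> U" using x U3 by blast
      moreover have "{i. P p q i} \<inter> {i. real (R i) / real (A i) < x} = {}"
      proof (safe)
        fix i assume "P p q i" "real (R i) / real (A i) < x"
        hence h1: "p * A i \<le> q * R i" using P by auto
        have "real (R i) * real q < real p * real (A i)"
          using \<open>real (R i) / real (A i) < x\<close> x Apos[of i]
          by (simp add: divide_simps)
        hence "R i * q < p * A i" by (metis of_nat_less_iff of_nat_mult)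
        thus "i \<in> {}" using h1 by (simp add: mult.commute)
      qed
      ultimately show False using U2 by simp
    qed
  }
  fix y assume ub: "\<And>x. x \<in> {real p / real q | p q. q \<noteq> 0 \<and> U_ae U (\<lambda>i. P p q i)} \<Longrightarrow> x \<le> y"
  show "L \<le> y"
  proof (rule ccontr)
    assume "\<not> L \<le> y"
    hence yL: "y < L" by simp
    have y0: "0 \<le> y" using ub[OF S0] by simp
    obtain t where t: "t \<in> \<rat>" "y < t" "t < L" using Rats_dense_in_real[OF yL] by blast
    obtain m n :: nat where mn: "n \<noteq> 0" "\<bar>t\<bar> = real m / real n"
      using Rats_abs_nat_div_natE[OF t(1)] by metis
    have tmn: "t = real m / real n" using mn t y0 by simp
    have "eventually (\<lambda>i. t < real (R i) / real (A i)) sequentially"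
      using lim t by (intro order_tendstoD(1)) auto
    hence "{i. t < real (R i) / real (A i)} \<in> U" by (rule ev_in_U[OF cof])
    moreover have "{i. t < real (R i) / real (A i)} \<subseteq> {i. P m n i}"
    proof safe
      fix i assume "t < real (R i) / real (A i)"
      hence "real m * real (A i) < real (R i) * real n"
        using tmn mn Apos[of i] by (simp add: divide_simps)
      hence "m * A i < R i * n" by (metis of_nat_less_iff of_nat_mult)
      thus "P m n i" using P by (simp add: mult.commute)
    qed
    ultimately have "{i. P m n i} \<in> U" using U4 by blast
    hence "t \<in> {real p / real q | p q. q \<noteq> 0 \<and> U_ae U (\<lambda>i. P p q i)}"
      using tmn mn unfolding U_ae_def by blast
    hence "t \<le> y" by (rule ub)
    thus False using t by simp
  qed
qed



lemma approx_lemma: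
  fixes x a N c r q :: real
  assumes N: "N \<ge> 2" and aN: "a \<ge> N" and eq: "x*N^2 = (c*N + r)*a - N^2"
    and r: "\<bar>r\<bar> \<le> N" and c: "\<bar>c - q*N\<bar> \<le> 2"
  shows "\<bar>x/a - q\<bar> \<le> 4/N"
proof -
  have a0: "a > 0" using N aN by simp
  have N0: "N > 0" using N by simp
  have alg: "\<And>w a N c r s p x::real. x = w*a \<Longrightarrow> x*N^2 = (c*N + r)*a - N^2 \<Longrightarrow> a*s = 1 \<Longrightarrow> N*p = 1 \<Longrightarrow> w*N = c + r*p - N*s"
    by algebra
  have xa: "x = (x/a)*a" using a0 by simp
  have "x/a*N = c + r*(1/N) - N*(1/a)"
    by (rule alg[OF xa eq]) (use a0 N0 in simp_all)
  hence e: "x/a*N = c + r/N - N/a" by simp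
  have "\<bar>r/N\<bar> = \<bar>r\<bar>/N" using N0 by simp
  moreover have "\<bar>r\<bar>/N \<le> 1" using r N0 by (simp add: divide_le_eq_1_pos)
  ultimately have r1: "r/N \<le> 1" "-(r/N) \<le> 1" unfolding abs_le_iff by linarith+
  have n1: "N/a \<le> 1" using aN a0 by (simp add: divide_le_eq_1_pos)
  have n0: "0 \<le> N/a" using a0 N0 by simp
  have c1: "c - q*N \<le> 2" "-(c - q*N) \<le> 2" using c unfolding abs_le_iff by linarith+
  have "x/a*N - q*N \<le> 4" "-(x/a*N - q*N) \<le> 4" using e r1 n1 n0 c1 by linarith+
  moreover have "(x/a - q)*N = x/a*N - q*N" by (simp add: left_diff_distrib)
  ultimately have "\<bar>(x/a - q)*N\<bar> \<le> 4" unfolding abs_le_iff by simp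
  hence "\<bar>x/a - q\<bar> * N \<le> 4" using N0 by (simp add: abs_mult)
  thus ?thesis using N0 by (simp add: pos_le_divide_eq)
qed

lemma floor_lemma:
  fixes q :: real and N :: nat
  assumes "0 \<le> q" "q \<le> 1" "N \<ge> 2"
  shows "nat \<lfloor>q * real (N-1)\<rfloor> \<le> N - 1"
    and "\<bar>real (nat \<lfloor>q * real (N-1)\<rfloor>) - q * real N\<bar> \<le> 2"
proof -
  have h0: "0 \<le> q * real (N-1)" using assms by simp
  have h1: "q * real (N-1) \<le> real (N-1)" using assms by (simp add: mult_left_le_one_le)
  have fl: "real (nat \<lfloor>q * real (N-1)\<rfloor>) = of_int \<lfloor>q * real (N-1)\<rfloor>" using h0 by simp
  have "of_int \<lfloor>q * real (N-1)\<rfloor> \<le> real (N-1)" using h1 by linarith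
  hence "real (nat \<lfloor>q * real (N-1)\<rfloor>) \<le> real (N-1)" using fl by simp
  thus "nat \<lfloor>q * real (N-1)\<rfloor> \<le> N - 1" by linarith
  have e: "q * real (N-1) = q * real N - q" using assms by (simp add: of_nat_diff algebra_simps)
  show "\<bar>real (nat \<lfloor>q * real (N-1)\<rfloor>) - q * real N\<bar> \<le> 2"
  proof -
    define y where "y = q * real (N-1)"
    define F where "F = real_of_int \<lfloor>y\<rfloor>"
    have F1: "F \<le> y" unfolding F_def by simp
    have F2: "y - 1 < F" unfolding F_def by linarith
    have "real (nat \<lfloor>q * real (N-1)\<rfloor>) = F" using fl unfolding F_def y_def .
    moreover have "y = q * real N - q" using e unfolding y_def .
    ultimately show ?thesis using F1 F2 assms(1,2) unfolding abs_le_iff by linarith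
  qed
qed

lemma tendsto_lemma:
  fixes X :: "nat \<Rightarrow> real"
  assumes "\<And>i. \<bar>X i - L\<bar> \<le> 4 / real (i+2)"
  shows "X \<longlonglongrightarrow> L"
proof -
  have b: "L - 4/real(n+2) \<le> X n \<and> X n \<le> L + 4/real(n+2)" for n
    using assms[of n] unfolding abs_le_iff by linarith
  have e1: "\<forall>\<^sub>F n in sequentially. L - 4 / real (n + 2) \<le> X n" using b by simp
  have e2: "\<forall>\<^sub>F n in sequentially. X n \<le> L + 4 / real (n + 2)" using b by simp
  have z: "(\<lambda>i. 4 / real (i+2)) \<longlonglongrightarrow> (0::real)"
    using LIMSEQ_ignore_initial_segment[OF lim_const_over_n[of "4::real"], of 2] by simp
  have l1: "(\<lambda>i. L - 4 / real (i+2)) \<longlonglongrightarrow> L" using tendsto_diff[OF tendsto_const z] by simp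
  have l2: "(\<lambda>i. L + 4 / real (i+2)) \<longlonglongrightarrow> L" using tendsto_add[OF tendsto_const z] by simp
  show ?thesis by (rule tendsto_sandwich[OF e1 e2 l1 l2])
qed



lemma core_nat:
  fixes N k m :: nat
  assumes N: "N \<ge> 2" and k: "k \<le> N - 1" and m: "m \<le> N - 1"
  shows "\<exists>a u v::nat. N \<le> a \<and> 0 < u \<and> u < a \<and> 0 < v \<and> v < a \<and> (u * v) mod a = 1 \<and>
     real u * (real N)^2 = (real k * real N + 1) * real a - (real N)^2 \<and>
     real v * (real N)^2 = (real (N - m) * real N + (-1)) * real a - (real N)^2"
proof -
  have "int N \<ge> 2" "0 \<le> int k" "int k \<le> int N - 1" "0 \<le> int m" "int m \<le> int N - 1"
    using N k m by auto
  from core_int[OF this] obtain a u v where H: "int N \<le> a" "0 < u" "u < a" "0 < v" "v < a"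
    "(u * v) mod a = 1" "u * (int N)^2 = (int k * int N + 1) * a - (int N)^2"
    "v * (int N)^2 = ((int N)^2 - int m * int N - 1) * a - (int N)^2" by blast
  have r1: "real_of_int (u * (int N)^2) = real_of_int ((int k * int N + 1) * a - (int N)^2)"
    using H(7) by simp
  have r2: "real_of_int (v * (int N)^2) = real_of_int (((int N)^2 - int m * int N - 1) * a - (int N)^2)"
    using H(8) by simp
  have a0: "a \<ge> 0" "u \<ge> 0" "v \<ge> 0" using H by auto
  have "nat u * nat v = nat (u * v)" using a0 by (simp add: nat_mult_distrib)
  moreover have "nat (u*v) mod nat a = nat ((u*v) mod a)"
    by (subst nat_mod_distrib) (use a0 in auto)
  ultimately have md: "(nat u * nat v) mod nat a = 1" using H(6) by simp
  have rm: "real (N - m) = real N - real m" using m N by simp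
  show ?thesis
  proof (intro exI conjI)
    show "N \<le> nat a" "0 < nat u" "nat u < nat a" "0 < nat v" "nat v < nat a" using H by auto
    show "(nat u * nat v) mod nat a = 1" by (rule md)
    show "real (nat u) * (real N)^2 = (real k * real N + 1) * real (nat a) - (real N)^2"
      using r1 a0 by simp
    show "real (nat v) * (real N)^2 = (real (N - m) * real N + (-1)) * real (nat a) - (real N)^2"
      using r2 a0 rm by (simp add: algebra_simps power2_eq_square)
  qed
qed

theorem proposition2p8:
  fixes q1 q2 :: real
  assumes "0 \<le> q1" "q1 \<le> 1" "0 \<le> q2" "q2 \<le> 1"
  shows "\<exists>U (a :: nat \<Rightarrow> nat) (b :: nat \<Rightarrow> nat).
           ultrafilter_on_nat U \<and> nonprincipal U \<and>
           (\<forall>i. 2 \<le> a i \<and> a i < b i \<and> coprime (a i) (b i)) \<and>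
           limit_2_semigroup U a b \<and>
           ultra_ratio U b (\<lambda>i. alpha_fn (a i) (b i)) a (\<lambda>i. 0) = q1 \<and>
           ultra_ratio U (\<lambda>i. beta1_fn (a i) (b i)) (\<lambda>i. 0) (\<lambda>i. a i * b i) (\<lambda>i. 0) = q2"
proof -
  obtain U where uf: "ultrafilter_on_nat U" and cof: "{A. finite (-A)} \<subseteq> U"
    using exists_ultra by blast
  have U4: "\<And>X Y. X \<in> U \<Longrightarrow> X \<subseteq> Y \<Longrightarrow> Y \<in> U"
    using uf unfolding ultrafilter_on_nat_def by blast
  have U2: "{} \<notin> U" and U3: "\<And>X Y. X \<in> U \<Longrightarrow> Y \<in> U \<Longrightarrow> X \<inter> Y \<in> U"
    using uf unfolding ultrafilter_on_nat_def by blast+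
  have np: "nonprincipal U" unfolding nonprincipal_def
  proof
    fix n show "{n} \<notin> U"
    proof
      assume "{n} \<in> U"
      moreover have "-{n} \<in> U" using cof by auto
      ultimately have "{n} \<inter> -{n} \<in> U" by (rule U3)
      thus False using U2 by simp
    qed
  qed
  define Q where "Q = (\<lambda>(i::nat) (a::nat) (u::nat) (v::nat). 2 \<le> a \<and> i+2 \<le> a \<and> 0<u \<and> u<a \<and> 0<v \<and> v<a \<and> (u*v) mod a = 1 \<and>
      \<bar>real u/real a - q1\<bar> \<le> 4/real(i+2) \<and> \<bar>real v/real a - q2\<bar> \<le> 4/real(i+2))"
  have "\<forall>i. \<exists>t::nat\<times>nat\<times>nat. Q i (fst t) (fst (snd t)) (snd (snd t))"
  proof
    fix i :: nat
    define N where "N = i + 2"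
    have N2: "N \<ge> 2" unfolding N_def by simp
    define k where "k = nat \<lfloor>q1 * real (N-1)\<rfloor>"
    define m where "m = nat \<lfloor>(1 - q2) * real (N-1)\<rfloor>"
    have k1: "k \<le> N - 1" and k2: "\<bar>real k - q1 * real N\<bar> \<le> 2"
      using floor_lemma[OF assms(1,2) N2] unfolding k_def by auto
    have m1: "m \<le> N - 1" and m2: "\<bar>real m - (1 - q2) * real N\<bar> \<le> 2"
      using floor_lemma[of "1 - q2", OF _ _ N2] assms(3,4) unfolding m_def by auto
    have m3: "\<bar>real (N - m) - q2 * real N\<bar> \<le> 2"
      using m2 m1 N2 by (simp add: of_nat_diff algebra_simps)
    obtain a u v where H: "N \<le> a" "0 < u" "u < a" "0 < v" "v < a" "(u * v) mod a = 1"
      "real u * (real N)^2 = (real k * real N + 1) * real a - (real N)^2"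
      "real v * (real N)^2 = (real (N - m) * real N + (-1)) * real a - (real N)^2"
      using core_nat[OF N2 k1 m1] by blast
    have RN: "real N \<ge> 2" "real a \<ge> real N" using N2 H(1) by auto
    have b1: "\<bar>real u/real a - q1\<bar> \<le> 4/real N"
      by (rule approx_lemma[OF RN H(7)]) (use RN k2 in simp_all)
    have b2: "\<bar>real v/real a - q2\<bar> \<le> 4/real N"
      by (rule approx_lemma[OF RN H(8)]) (use RN m3 in simp_all)
    have X: "2 \<le> a" "i+2 \<le> a" using H(1) N2 unfolding N_def by auto
    have b1': "\<bar>real u/real a - q1\<bar> \<le> 4/real(i+2)" using b1 unfolding N_def .
    have b2': "\<bar>real v/real a - q2\<bar> \<le> 4/real(i+2)" using b2 unfolding N_def .
    have "Q i a u v" unfolding Q_def by (intro conjI X H(2-6) b1' b2')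
    thus "\<exists>t::nat\<times>nat\<times>nat. Q i (fst t) (fst (snd t)) (snd (snd t))"
      by (intro exI[of _ "(a,u,v)"]) simp
  qed
  then obtain T where T: "\<And>i. Q i (fst (T i)) (fst (snd (T i))) (snd (snd (T i)))"
    by metis
  define A where "A = (\<lambda>i. fst (T i))"
  define Uu where "Uu = (\<lambda>i. fst (snd (T i)))"
  define Vv where "Vv = (\<lambda>i. snd (snd (T i)))"
  define B where "B = (\<lambda>i. A i * (i+2) + Uu i)"
  have QA: "Q i (A i) (Uu i) (Vv i)" for i unfolding A_def Uu_def Vv_def by (rule T)
  have A2: "2 \<le> A i" and Ai: "i + 2 \<le> A i" and U0: "0 < Uu i" and UA: "Uu i < A i"
    and V0: "0 < Vv i" and VA: "Vv i < A i" and UV: "(Uu i * Vv i) mod A i = 1"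
    and lu: "\<bar>real (Uu i)/real (A i) - q1\<bar> \<le> 4/real(i+2)"
    and lv: "\<bar>real (Vv i)/real (A i) - q2\<bar> \<le> 4/real(i+2)" for i
    using QA[of i] unfolding Q_def by blast+
  have Beq: "B i = Uu i + (i+2) * A i" for i unfolding B_def by simp
  have Bmod: "B i mod A i = Uu i" for i unfolding Beq mod_mult_self1 using UA[of i] by simp
  have Bdiv: "B i div A i = i + 2" for i
  proof -
    have "A i \<noteq> 0" using A2[of i] by simp
    hence "(Uu i + (i+2) * A i) div A i = (i+2) + Uu i div A i" by (rule div_mult_self1)
    thus ?thesis unfolding Beq using UA[of i] by simp
  qed
  have BV: "(B i * Vv i) mod A i = 1" for i
  proof -
    have "(B i * Vv i) mod A i = ((B i mod A i) * Vv i) mod A i" by (simp add: mod_mult_left_eq)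
    thus ?thesis using Bmod UV by simp
  qed
  have AB: "A i < B i" for i
  proof -
    have "A i * 1 < A i * (i+2)" using A2[of i] by (intro mult_strict_left_mono) auto
    thus ?thesis unfolding B_def by linarith
  qed
  have Bi: "i < B i" for i using AB[of i] Ai[of i] by simp
  have cop: "coprime (A i) (B i)" for i
  proof (rule coprimeI)
    fix c assume "c dvd A i" "c dvd B i"
    hence "c dvd (B i * Vv i) mod A i" by (simp add: dvd_mod)
    thus "is_unit c" using BV by simp
  qed
  have least: "(LEAST k. k < A i \<and> (k * B i) mod A i = 1 mod A i) = Vv i" for i
  proof (rule Least_equality)
    have "1 mod A i = 1" using A2[of i] by simp
    thus "Vv i < A i \<and> (Vv i * B i) mod A i = 1 mod A i" using VA BV by (simp add: mult.commute)
  next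
    fix k assume kk: "k < A i \<and> (k * B i) mod A i = 1 mod A i"
    have o: "1 mod A i = 1" using A2[of i] by simp
    have "(k * B i * Vv i) mod A i = (((k * B i) mod A i) * Vv i) mod A i"
      by (simp add: mod_mult_left_eq)
    also have "\<dots> = Vv i" using kk o VA[of i] by simp
    finally have e1: "(k * B i * Vv i) mod A i = Vv i" .
    have "(k * B i * Vv i) mod A i = (k * ((B i * Vv i) mod A i)) mod A i"
      by (simp add: mod_mult_right_eq mult.assoc)
    also have "\<dots> = k" using kk BV by simp
    finally show "Vv i \<le> k" using e1 by simp
  qed
  have r1: "ultra_ratio U B (\<lambda>i. alpha_fn (A i) (B i)) A (\<lambda>i. 0) = q1"
    unfolding ultra_ratio_def
  proof (rule sup_ratio[OF uf cof, where A = A and R = Uu])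
    show "0 < A i" for i using A2[of i] by simp
    show "(\<lambda>i. real (Uu i) / real (A i)) \<longlonglongrightarrow> q1" by (rule tendsto_lemma) (rule lu)
    show "0 \<le> q1" by (rule assms)
    fix p q i
    have "alpha_fn (A i) (B i) = (i+2) * A i" unfolding alpha_fn_def Bdiv ..
    thus "(p * A i + q * alpha_fn (A i) (B i) \<le> q * B i + p * 0) = (p * A i \<le> q * Uu i)"
      unfolding B_def by (simp add: algebra_simps)
  qed
  have r2: "ultra_ratio U (\<lambda>i. beta1_fn (A i) (B i)) (\<lambda>i. 0) (\<lambda>i. A i * B i) (\<lambda>i. 0) = q2"
    unfolding ultra_ratio_def
  proof (rule sup_ratio[OF uf cof, where A = A and R = Vv])
    show "0 < A i" for i using A2[of i] by simp
    show "(\<lambda>i. real (Vv i) / real (A i)) \<longlonglongrightarrow> q2" by (rule tendsto_lemma) (rule lv)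
    show "0 \<le> q2" by (rule assms)
    fix p q i
    have "beta1_fn (A i) (B i) = Vv i * B i" unfolding beta1_fn_def least ..
    moreover have "B i > 0" using AB[of i] by simp
    ultimately show "(p * (A i * B i) + q * 0 \<le> q * beta1_fn (A i) (B i) + p * 0) = (p * A i \<le> q * Vv i)"
      by (simp add: mult.assoc[symmetric])
  qed
  have lim: "limit_2_semigroup U A B"
    unfolding limit_2_semigroup_def
  proof
    assume "\<exists>T. numerical_semigroup T \<and> ultra_iso_to U (\<lambda>i. sgp2 (A i) (B i)) T"
    then obtain T :: "nat set" where "ultra_iso_to U (\<lambda>i. sgp2 (A i) (B i)) T" by blast
    then obtain \<phi> :: "(nat \<Rightarrow> nat) \<Rightarrow> nat" where
      inj: "\<forall>f\<in>ultra_carrier (\<lambda>i. sgp2 (A i) (B i)). \<forall>g\<in>ultra_carrier (\<lambda>i. sgp2 (A i) (B i)).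
              \<phi> f = \<phi> g \<longleftrightarrow> U_ae U (\<lambda>i. f i = g i)" and
      less: "\<forall>f\<in>ultra_carrier (\<lambda>i. sgp2 (A i) (B i)). \<forall>g\<in>ultra_carrier (\<lambda>i. sgp2 (A i) (B i)).
              \<phi> f < \<phi> g \<longleftrightarrow> U_ae U (\<lambda>i. f i < g i)"
      unfolding ultra_iso_to_def by (elim exE conjE) blast
    define F where "F = (\<lambda>n::nat. \<lambda>i. n * A i)"
    define c where "c = (\<lambda>i. A i * B i)"
    have Fc: "F n \<in> ultra_carrier (\<lambda>i. sgp2 (A i) (B i))" for n
      unfolding F_def ultra_carrier_def sgp2_def
    proof (safe)
      fix i have "n * A i = n * A i + 0 * B i" by simp
      thus "\<exists>x y. n * A i = x * A i + y * B i \<and> True" by blast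
    qed
    have cc: "c \<in> ultra_carrier (\<lambda>i. sgp2 (A i) (B i))"
      unfolding c_def ultra_carrier_def sgp2_def
    proof (safe)
      fix i have "A i * B i = B i * A i + 0 * B i" by simp
      thus "\<exists>x y. A i * B i = x * A i + y * B i \<and> True" by blast
    qed
    have lt: "\<phi> (F n) < \<phi> c" for n
    proof -
      have "- {i. n \<le> i} \<subseteq> {..<n}" by auto
      hence "finite (- {i. n \<le> i})" using finite_subset by blast
      hence "{i. n \<le> i} \<in> U" using cof by auto
      moreover have "{i. n \<le> i} \<subseteq> {i. F n i < c i}"
      proof safe
        fix i assume "n \<le> i"
        hence "n < B i" using Bi[of i] by simp
        thus "F n i < c i" unfolding F_def c_def using A2[of i] by (simp add: mult.commute)
      qed
      ultimately have "U_ae U (\<lambda>i. F n i < c i)"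
        unfolding U_ae_def by (rule U4)
      thus ?thesis using less[rule_format, OF Fc cc] by simp
    qed
    have "inj (\<lambda>n. \<phi> (F n))"
    proof (rule injI)
      fix n n' assume "\<phi> (F n) = \<phi> (F n')"
      hence "U_ae U (\<lambda>i. F n i = F n' i)" using inj[rule_format, OF Fc Fc] by simp
      hence "{i. F n i = F n' i} \<in> U" unfolding U_ae_def .
      show "n = n'"
      proof (rule ccontr)
        assume "n \<noteq> n'"
        moreover have "\<And>i. 0 < A i" using A2 by (metis less_le_trans zero_less_numeral)
        ultimately have "{i. F n i = F n' i} = {}" unfolding F_def by auto
        thus False using \<open>{i. F n i = F n' i} \<in> U\<close> U2 by simp
      qed
    qed
    moreover have "range (\<lambda>n. \<phi> (F n)) \<subseteq> {..<\<phi> c}" using lt by auto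
    hence "finite (range (\<lambda>n. \<phi> (F n)))" using finite_subset by blast
    ultimately have "finite (UNIV :: nat set)" using finite_imageD[of "\<lambda>n. \<phi> (F n)" UNIV] by simp
    thus False by simp
  qed
  have all: "\<forall>i. 2 \<le> A i \<and> A i < B i \<and> coprime (A i) (B i)" using A2 AB cop by blast
  show ?thesis
    by (rule exI[of _ U], rule exI[of _ A], rule exI[of _ B]) (intro conjI uf np all lim r1 r2)
qed

end
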